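(* Let $T$ be a constant invertible complex $N\times N$ matrix with $T^\ast=T^\intercal=T^{-1}$. Let $C,K,L$ be constant complex $N\times N$ matrices with $K^\intercal=K$, and $V\in\mathbb{C}^N$, such that $C^\ast=TCT^{-1}$, $K^\ast=TKT^{-1}$, $L^\ast=TLT^{-1}$, $V^\ast=TV$. Write $\tilde\xi(\mathbf{t}_o,L)=\sum_{n\ge0}t_{2n+1}L^{2n+1}$ and $\tilde\xi'(\mathbf{t}_o,L)=\sum_{n\ge0}(2n+1)t_{2n+1}L^{2n}$ for real $\mathbf{t}_o=(t_1,t_3,t_5,\ldots)$. Then each of the following functions $\tau$ is real: (a) (case 1, CKP) if $L^\intercal K+KL=-VV^\intercal$ and $C^\intercal=C$: $\tau=\det\big(C-e^{\tilde\xi(\mathbf{t}_o,L^\intercal)}Ke^{\tilde\xi(\mathbf{t}_o,L)}\big)$; (b) (case 1, BKP) if $L^\intercal K+KL=-VV^\intercal$ and $C^\intercal=-C$: $\tau=\det\big(C-e^{\tilde\xi(\mathbf{t}_o,L^\intercal)}(L^\intercal K-KL)e^{\tilde\xi(\mathbf{t}_o,L)}\big)$; (c) (case 2, CKP) if $L^\intercal=-L$, $I_N+[L,K]=VV^\intercal$ and $C^\intercal=C$: $\tau=\det\big(e^{\tilde\xi(\mathbf{t}_o,L)}Ce^{-\tilde\xi(\mathbf{t}_o,L)}+\tilde\xi'(\mathbf{t}_o,L)-K\big)$; (d) (case 2, BKP) if $L^\intercal=-L$, $I_N+[L,K]=VV^\intercal$ and $C^\intercal=-C$: $\tau=\det\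big(e^{\tilde\xi(\mathbf{t}_o,L)}Ce^{-\tilde\xi(\mathbf{t}_o,L)}-(KL+LK)+2L\,\tilde\xi'(\mathbf{t}_o,L)\big)$.
   Context: $X^\ast$ denotes the entrywise complex conjugate of $X$ and $X^\intercal$ its transpose; $[L,K]=LK-KL$. These $\tau$-functions determine, via $\phi=(\ln\tau)_{t_1}$, solutions of the BKP and CKP hierarchies constructed from a matrix Riccati hierarchy. *)

theory Defs
  imports "HOL-Analysis.Analysis"
begin

type_synonym 'n cmat = "complex ^ 'n ^ 'n"

definition cnjm :: "'n::finite cmat \<Rightarrow> 'n cmat" where
  "cnjm A = (\<chi> i j. cnj (A $ i $ j))"

definition cnjv :: "complex ^ 'n::finite \<Rightarrow> complex ^ 'n" where
  "cnjv v = (\<chi> i. cnj (v $ i))"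

definition outer :: "complex ^ 'n::finite \<Rightarrow> 'n cmat" where
  "outer v = (\<chi> i j. v $ i * v $ j)"

primrec mpow :: "'n::finite cmat \<Rightarrow> nat \<Rightarrow> 'n cmat" where
  "mpow A 0 = mat 1"
| "mpow A (Suc k) = A ** mpow A k"

definition mexp :: "'n::finite cmat \<Rightarrow> 'n cmat" where
  "mexp A = (\<Sum>k. (1 / fact k :: real) *\<^sub>R mpow A k)"

text \<open>Odd times t_o = (t_1, t_3, t_5, ...) encoded as t n = t_{2n+1}; only
  the first M of them may be nonzero (finitely many times), so
  xi M t L = sum_{n<M} t_{2n+1} L^{2n+1}.\<close>
definition xi :: "nat \<Rightarrow> (nat \<Rightarrow> real) \<Rightarrow> 'n::finite cmat \<Rightarrow> 'n cmat" where
  "xi M t L = (\<Sum>n<M. t n *\<^sub>R mpow L (2*n+1))"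

definition xi' :: "nat \<Rightarrow> (nat \<Rightarrow> real) \<Rightarrow> 'n::finite cmat \<Rightarrow> 'n cmat" where
  "xi' M t L = (\<Sum>n<M. (real (2*n+1) * t n) *\<^sub>R mpow L (2*n))"

end

theory Submission
  imports Defs
begin


definition mn :: "'n::finite cmat \<Rightarrow> real" where
  "mn A = (\<Sum>i\<in>UNIV. \<Sum>j\<in>UNIV. norm (A$i$j))"

lemma mn_nonneg: "0 \<le> mn A"
  unfolding mn_def by (intro sum_nonneg) auto

lemma norm_le_mn: "norm A \<le> mn A"
proof -
  have "norm A \<le> (\<Sum>i\<in>UNIV. norm (A$i))"
    unfolding norm_vec_def by (rule L2_set_le_sum) auto
  also have "\<dots> \<le> mn A" unfolding mn_def
    by (intro sum_mono) (simp add: norm_vec_def L2_set_le_sum)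
  finally show ?thesis .
qed

lemma mn_mult: "mn (A ** B) \<le> mn A * mn (B::'n::finite cmat)"
proof -
  have "mn (A ** B) \<le> (\<Sum>i\<in>UNIV. \<Sum>j\<in>UNIV. \<Sum>k\<in>UNIV. norm (A$i$k) * norm (B$k$j))"
    unfolding mn_def matrix_matrix_mult_def
    by (intro sum_mono) (auto intro!: order_trans[OF norm_sum] simp: norm_mult)
  also have "\<dots> = (\<Sum>i\<in>UNIV. \<Sum>k\<in>UNIV. norm (A$i$k) * (\<Sum>j\<in>UNIV. norm (B$k$j)))"
    by (subst sum.swap) (simp add: sum_distrib_left)
  also have "\<dots> \<le> (\<Sum>i\<in>UNIV. \<Sum>k\<in>UNIV. norm (A$i$k) * mn B)"
  proof (intro sum_mono mult_left_mono)
    fix k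
    show "(\<Sum>j\<in>UNIV. norm (B$k$j)) \<le> mn B" unfolding mn_def
      by (rule member_le_sum[where f="\<lambda>k. \<Sum>j\<in>UNIV. norm (B$k$j)"]) (auto intro: sum_nonneg)
  qed auto
  also have "\<dots> = mn A * mn B" by (simp add: mn_def sum_distrib_right)
  finally show ?thesis .
qed

lemma mn_one: "mn (mat 1 :: 'n::finite cmat) = real CARD('n)"
proof -
  have "mn (mat 1 :: 'n cmat) = (\<Sum>i\<in>(UNIV::'n set). \<Sum>j\<in>UNIV. if i = j then 1 else 0)"
    unfolding mn_def mat_def by (intro sum.cong) auto
  then show ?thesis by simp
qed

lemma mn_mpow: "mn (mpow A k) \<le> real CARD('n) * mn (A::'n::finite cmat) ^ k"
proof (induction k)
  case 0 then show ?case by (simp add: mn_one)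
next
  case (Suc k)
  have "mn (mpow A (Suc k)) \<le> mn A * mn (mpow A k)" by (simp add: mn_mult)
  also have "\<dots> \<le> mn A * (real CARD('n) * mn A ^ k)"
    by (rule mult_left_mono[OF Suc mn_nonneg])
  finally show ?case by (simp add: algebra_simps)
qed

lemma mexp_summable: "summable (\<lambda>k. (1 / fact k :: real) *\<^sub>R mpow (A::'n::finite cmat) k)"
proof (rule summable_norm_cancel, rule summable_comparison_test')
  show "summable (\<lambda>k. real CARD('n) * (inverse (fact k) * mn A ^ k))"
    by (intro summable_mult summable_exp)
  fix k :: nat
  have "norm ((1 / fact k :: real) *\<^sub>R mpow A k) = (1/fact k) * norm (mpow A k)" by simp
  also have "\<dots> \<le> (1/fact k) * (real CARD('n) * mn A ^ k)"
    by (intro mult_left_mono order_trans[OF norm_le_mn mn_mpow]) auto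
  finally show "norm (norm ((1 / fact k :: real) *\<^sub>R mpow A k)) \<le> real CARD('n) * (inverse (fact k) * mn A ^ k)"
    by (simp add: field_simps)
qed

lemma inv_props:
  fixes T :: "'a::semiring_1^'n^'n"
  assumes "invertible T"
  shows "T ** matrix_inv T = mat 1" "matrix_inv T ** T = mat 1"
  using someI_ex[OF assms[unfolded invertible_def]] unfolding matrix_inv_def by auto

lemma cnjm_mult: "cnjm (A ** B) = cnjm A ** cnjm (B::'n::finite cmat)"
  by (simp add: cnjm_def matrix_matrix_mult_def vec_eq_iff)
lemma cnjm_add: "cnjm (A + B) = cnjm A + cnjm B"
  by (simp add: cnjm_def vec_eq_iff)
lemma cnjm_scaleR: "cnjm (r *\<^sub>R A) = r *\<^sub>R cnjm A"
  by (simp add: cnjm_def vec_eq_iff)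
lemma cnjm_one: "cnjm (mat 1) = mat 1"
  by (simp add: cnjm_def vec_eq_iff mat_def)
lemma cnjm_transpose: "cnjm (transpose A) = transpose (cnjm A)"
  by (simp add: cnjm_def vec_eq_iff transpose_def)

lemma det_cnjm: "det (cnjm A) = cnj (det A)"
  unfolding det_def cnjm_def by simp

lemma mm_add_r: "(A + B) ** C = A ** C + B ** (C::'n::finite cmat)"
  by (simp add: matrix_matrix_mult_def vec_eq_iff algebra_simps sum.distrib)
lemma mm_scaleR_l: "(r *\<^sub>R A) ** C = r *\<^sub>R (A ** (C::'n::finite cmat))"
  by (simp add: matrix_matrix_mult_def vec_eq_iff scaleR_sum_right)
lemma mm_scaleR_r: "A ** (r *\<^sub>R C) = r *\<^sub>R (A ** (C::'n::finite cmat))"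
  by (simp add: matrix_matrix_mult_def vec_eq_iff scaleR_sum_right)

lemma linear_cnjm: "linear (cnjm :: 'n::finite cmat \<Rightarrow> _)"
  by (rule linearI) (simp_all add: cnjm_add cnjm_scaleR)

lemma linear_conj: "linear (\<lambda>X::'n::finite cmat. (T::'n cmat) ** X ** (S::'n cmat))"
  by (rule linearI) (simp_all add: matrix_add_ldistrib mm_add_r mm_scaleR_l mm_scaleR_r)

definition good :: "'n::finite cmat \<Rightarrow> 'n cmat \<Rightarrow> 'n cmat \<Rightarrow> bool" where
  "good T S X \<longleftrightarrow> cnjm X = T ** X ** S"

context
  fixes T S :: "'n::finite cmat"
  assumes TS: "T ** S = mat 1" and ST: "S ** T = mat 1"
begin

lemma good_one: "good T S (mat 1)"
  by (simp add: good_def cnjm_one TS)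

lemma good_add: "good T S A \<Longrightarrow> good T S B \<Longrightarrow> good T S (A + B)"
  by (simp add: good_def cnjm_add matrix_add_ldistrib mm_add_r)

lemma good_scaleR: "good T S A \<Longrightarrow> good T S (r *\<^sub>R A)"
  by (simp add: good_def cnjm_scaleR mm_scaleR_l mm_scaleR_r)

lemma good_uminus: "good T S A \<Longrightarrow> good T S (- A)"
  using good_scaleR[of A "-1"] by simp

lemma good_diff: "good T S A \<Longrightarrow> good T S B \<Longrightarrow> good T S (A - B)"
  using good_add[of A "-B"] good_uminus[of B] by simp

lemma good_mult: "good T S A \<Longrightarrow> good T S B \<Longrightarrow> good T S (A ** B)"
proof -
  assume a: "good T S A" and b: "good T S B"
  have "T ** (A ** B) ** S = (T ** A ** S) ** (T ** B ** S)"
    by (simp add: matrix_mul_assoc) (metis ST matrix_mul_assoc matrix_mul_rid)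
  then show ?thesis using a b by (simp add: good_def cnjm_mult)
qed

lemma good_mpow: "good T S A \<Longrightarrow> good T S (mpow A k)"
  by (induction k) (simp_all add: good_one good_mult)

lemma good_sum: "(\<And>i. i \<in> I \<Longrightarrow> good T S (f i)) \<Longrightarrow> good T S (\<Sum>i\<in>I. f i)"
proof (induction I rule: infinite_finite_induct)
  case (infinite A) then show ?case by (simp add: good_def cnjm_def vec_eq_iff matrix_matrix_mult_def)
next
  case empty then show ?case by (simp add: good_def cnjm_def vec_eq_iff matrix_matrix_mult_def)
next
  case (insert x F) then show ?case by (simp add: good_add)
qed

lemma good_mexp: "good T S A \<Longrightarrow> good T S (mexp A)"
proof -
  assume a: "good T S A"
  let ?f = "\<lambda>k. (1 / fact k :: real) *\<^sub>R mpow A k"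
  have s: "?f sums mexp A" unfolding mexp_def using mexp_summable by (rule summable_sums)
  have bl1: "bounded_linear (cnjm :: 'n cmat \<Rightarrow> _)" using linear_cnjm linear_conv_bounded_linear by blast
  have bl2: "bounded_linear (\<lambda>X::'n cmat. T ** X ** S)" using linear_conj linear_conv_bounded_linear by blast
  have 1: "(\<lambda>k. cnjm (?f k)) sums cnjm (mexp A)" by (rule bounded_linear.sums[OF bl1 s])
  have 2: "(\<lambda>k. T ** ?f k ** S) sums (T ** mexp A ** S)" by (rule bounded_linear.sums[OF bl2 s])
  have "(\<lambda>k. cnjm (?f k)) = (\<lambda>k. T ** ?f k ** S)"
    using good_scaleR[OF good_mpow[OF a]] by (simp add: good_def)
  with 1 2 show ?thesis unfolding good_def using sums_unique2 by metis
qed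

lemma good_xi: "good T S L \<Longrightarrow> good T S (xi M t L)"
  unfolding xi_def by (intro good_sum good_scaleR good_mpow)

lemma good_xi': "good T S L \<Longrightarrow> good T S (xi' M t L)"
  unfolding xi'_def by (intro good_sum good_scaleR good_mpow)

lemma good_det: "good T S X \<Longrightarrow> Im (det X) = 0"
proof -
  assume "good T S X"
  then have "cnj (det X) = det (T ** X ** S)" by (simp add: good_def det_cnjm[symmetric])
  also have "\<dots> = det X * det (T ** S)" by (simp add: det_mul)
  also have "\<dots> = det X" by (simp add: TS)
  finally show ?thesis by (metis Reals_cnj_iff complex_is_Real_iff)
qed

end

theorem propositionC4:
  fixes T C K L :: "complex ^ 'n::finite ^ 'n"
    and V :: "complex ^ 'n"
  assumes hT_inv: "invertible T"
    and hT1: "cnjm T = transpose T"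
    and hT2: "transpose T = matrix_inv T"
    and hK: "transpose K = K"
    and hC: "cnjm C = T ** C ** matrix_inv T"
    and hKc: "cnjm K = T ** K ** matrix_inv T"
    and hL: "cnjm L = T ** L ** matrix_inv T"
    and hV: "cnjv V = T *v V"
  shows
    "(transpose L ** K + K ** L = - outer V \<and> transpose C = C \<longrightarrow>
       (\<forall>(M::nat) (t::nat \<Rightarrow> real).
          Im (det (C - mexp (xi M t (transpose L)) ** K ** mexp (xi M t L))) = 0))
   \<and> (transpose L ** K + K ** L = - outer V \<and> transpose C = - C \<longrightarrow>
       (\<forall>(M::nat) (t::nat \<Rightarrow> real).
          Im (det (C - mexp (xi M t (transpose L)) ** (transpose L ** K - K ** L)
                     ** mexp (xi M t L))) = 0))
   \<and> (transpose L = - L \<and> mat 1 + (L ** K - K ** L) = outer V \<and> transpose C = C \<longrightarrow>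
       (\<forall>(M::nat) (t::nat \<Rightarrow> real).
          Im (det (mexp (xi M t L) ** C ** mexp (- xi M t L) + xi' M t L - K)) = 0))
   \<and> (transpose L = - L \<and> mat 1 + (L ** K - K ** L) = outer V \<and> transpose C = - C \<longrightarrow>
       (\<forall>(M::nat) (t::nat \<Rightarrow> real).
          Im (det (mexp (xi M t L) ** C ** mexp (- xi M t L) - (K ** L + L ** K)
                   + (2::real) *\<^sub>R (L ** xi' M t L))) = 0))"
proof -
  define S where "S = matrix_inv T"
  have TS: "T ** S = mat 1" and ST: "S ** T = mat 1" using inv_props[OF hT_inv] by (auto simp: S_def)
  have gC: "good T S C" using hC by (simp add: good_def S_def)
  have gK: "good T S K" using hKc by (simp add: good_def S_def)
  have gL: "good T S L" using hL by (simp add: good_def S_def)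
  have tS: "transpose S = T" using hT2 by (metis S_def transpose_transpose)
  have gLt: "good T S (transpose L)"
    unfolding good_def cnjm_transpose hL
    by (simp add: matrix_transpose_mul tS hT2 S_def[symmetric] matrix_mul_assoc)
  note G = good_add[OF TS ST] good_diff[OF TS ST] good_uminus[OF TS ST] good_scaleR[OF TS ST]
     good_mult[OF TS ST] good_mexp[OF TS ST] good_xi[OF TS ST] good_xi'[OF TS ST]
  note D = good_det[OF TS ST]
  show ?thesis
    by (intro conjI impI allI D G gC gK gL gLt)
qed

end
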